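(* Let $x\in J$ with $\mathrm{supp}(x)=\mathbb N$, and let $(A_n)$ be a sequence of nonempty finite subsets of $\mathbb N$ converging pointwise (i.e. their indicator functions converge pointwise) to a set $A\subset\mathbb N$. Then $\lim_{n\to\infty}\|x\|_{A_n}=\|x\|_A$.
   Context: For a real sequence $x=(x(n))_{n\in\mathbb N}$ let $\|x\|_J=\sup\bigl(\sum_{i=1}^n|\sum_{k\in I_i}x(k)|^2\bigr)^{1/2}$ over all $n$ and all families of pairwise disjoint intervals $I_1,\dots,I_n$ of $\mathbb N$ (intervals: nonempty sets of consecutive positive integers). $J=\{x:\|x\|_J<\infty\}$; for $x\in J$ and any interval $I$ (finite or infinite) the series $\sum_{k\in I}x(k)$ converges. $\mathrm{supp}(x)=\{n:x(n)\ne0\}$. For $A\subset\mathbb N$, with $m_0=0$, the partition $\mathcal P_A$ of $\mathbb N$ into intervals is: $\{\mathbb N\}$ if $A=\emptyset$; $\{(m_{i-1},m_i]\}_{i=1}^k\cup\{(m_k,\infty)\}$ if $A=\{m_1<\dots<m_k\}$; $\{(m_{i-1},m_i]\}_{i\in\mathbb N}$ if $A=\{m_1<m_2<\cdots\}$ is infinite (intervals taken in $\mathbb N$). For $x\in J$, $\|x\|_A=\bigl(\sum_{I\in\mathcal P_A}|\sum_{k\in I}x(k)|^2\bigr)^{1/2}$. *)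

theory Defs
  imports Complex_Main "HOL-Library.Infinite_Set" "HOL-Library.Indicator_Function"
begin

text \<open>Sequences are functions nat => real; the index set of the paper (positive integers)
  is {1..}; the value at 0 is never used by any definition below.
  Intervals {a..b} with 1 <= a <= b are encoded as pairs (a,b).\<close>

definition J_values :: "(nat \<Rightarrow> real) \<Rightarrow> real set" where
  "J_values x = {\<Sum>p\<in>F. (\<Sum>k=fst p..snd p. x k)^2 | F.
      finite F \<and> (\<forall>p\<in>F. 1 \<le> fst p \<and> fst p \<le> snd p) \<and>
      (\<forall>p\<in>F. \<forall>q\<in>F. p \<noteq> q \<longrightarrow> {fst p..snd p} \<inter> {fst q..snd q} = {})}"

definition in_J :: "(nat \<Rightarrow> real) \<Rightarrow> bool" where
  "in_J x \<longleftrightarrow> bdd_above (J_values x)"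

definition normJ :: "(nat \<Rightarrow> real) \<Rightarrow> real" where
  "normJ x = sqrt (Sup (J_values x))"

text \<open>Endpoints m_0 = 0, m_1 < m_2 < ... of an infinite set A.\<close>
definition pt :: "nat set \<Rightarrow> nat \<Rightarrow> nat" where
  "pt A i = (if i = 0 then 0 else enumerate A (i - 1))"

text \<open>For finite A = {m_1<...<m_k}
  the intervals are (m_{i-1},m_i] plus the tail (m_k,\<infinity>), whose sum is the series
  x(m_k+1) + x(m_k+2) + ...; for A = {} this is the single interval N.\<close>
definition normA :: "(nat \<Rightarrow> real) \<Rightarrow> nat set \<Rightarrow> real" where
  "normA x A = sqrt (if finite A then
      (let m = 0 # sorted_list_of_set A in
        (\<Sum>i<length m - 1. (\<Sum>k\<in>{m!i<..m!(Suc i)}. x k)^2) + (\<Sum>k. x (k + last m + 1))^2)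
    else (\<Sum>i. (\<Sum>k\<in>{pt A i<..pt A (Suc i)}. x k)^2))"

end

theory Submission
  imports Defs
begin


definition psum :: "(nat \<Rightarrow> real) \<Rightarrow> nat \<Rightarrow> real" where
  "psum x n = (\<Sum>k=1..n. x k)"

lemma psum_0[simp]: "psum x 0 = 0" by (simp add: psum_def)

lemma psum_diff: "a \<le> b \<Longrightarrow> (\<Sum>k=Suc a..b. x k) = psum x b - psum x a"
proof (induction b)
  case 0 then show ?case by simp
next
  case (Suc b)
  show ?case
  proof (cases "a = Suc b")
    case True then show ?thesis by (simp add: psum_def)
  next
    case False
    then have "a \<le> b" using Suc by simp
    then show ?thesis using Suc by (simp add: psum_def sum.cl_ivl_Suc)
  qed
qed

lemma psum_diff': "a \<le> b \<Longrightarrow> (\<Sum>k\<in>{a<..b}. x k) = psum x b - psum x a"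
  using psum_diff by (simp add: atLeastSucAtMost_greaterThanAtMost[symmetric])

definition hasel :: "nat set \<Rightarrow> nat \<Rightarrow> bool" where
  "hasel B i \<longleftrightarrow> infinite B \<or> (finite B \<and> i < card B)"

lemma card_fin: "i < card B \<Longrightarrow> finite B"
  using card.infinite by force

lemma hasel_in: "hasel B i \<Longrightarrow> enumerate B i \<in> B"
  by (cases "finite B") (auto simp: hasel_def enumerate_in_set finite_enumerate_in_set)

lemma hasel_mono: "hasel B j \<Longrightarrow> i < j \<Longrightarrow> hasel B i \<and> enumerate B i < enumerate B j"
  by (cases "finite B") (auto simp: hasel_def enumerate_mono finite_enumerate_mono)

lemma hasel_ex: "k \<in> B \<Longrightarrow> \<exists>j. hasel B j \<and> enumerate B j = k"
  unfolding hasel_def by (metis enumerate_Ex finite_enumerate_Ex)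

lemma hasel_le: "hasel B i \<Longrightarrow> i \<le> enumerate B i"
  by (cases "finite B") (auto simp: hasel_def le_enumerate finite_le_enumerate)

lemma hasel_card: assumes "hasel B i" shows "card {k\<in>B. k < enumerate B i} = i"
proof -
  have "{k\<in>B. k < enumerate B i} = enumerate B ` {..<i}"
  proof
    show "{k\<in>B. k < enumerate B i} \<subseteq> enumerate B ` {..<i}"
    proof
      fix k assume k: "k \<in> {k\<in>B. k < enumerate B i}"
      then obtain j where j: "hasel B j" "enumerate B j = k" using hasel_ex by blast
      have "j < i"
      proof (rule ccontr)
        assume "\<not> j < i"
        then have "i = j \<or> i < j" by auto
        then show False using hasel_mono[OF j(1), of i] j k by auto
      qed
      then show "k \<in> enumerate B ` {..<i}" using j by auto
    qed
  next
    show "enumerate B ` {..<i} \<subseteq> {k\<in>B. k < enumerate B i}"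
      using hasel_mono[OF assms] hasel_in by auto
  qed
  moreover have "inj_on (enumerate B) {..<i}"
    unfolding inj_on_def
    by (metis assms hasel_mono lessThan_iff linorder_neqE_nat order_less_irrefl)
  ultimately show ?thesis by (simp add: card_image)
qed

lemma hasel_char: assumes "e \<in> B" "card {k\<in>B. k < e} = i"
  shows "hasel B i \<and> enumerate B i = e"
proof -
  obtain j where j: "hasel B j" "enumerate B j = e" using hasel_ex[OF assms(1)] by blast
  have "j = i" using hasel_card[OF j(1)] j(2) assms(2) by simp
  then show ?thesis using j by simp
qed

lemma stab: assumes "B \<inter> {..N} = C \<inter> {..N}" "hasel C i" "enumerate C i \<le> N"
  shows "hasel B i \<and> enumerate B i = enumerate C i"
proof -
  let ?e = "enumerate C i"
  have memb: "k \<in> B \<longleftrightarrow> k \<in> C" if "k \<le> N" for k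
  proof -
    have "k \<in> B \<inter> {..N} \<longleftrightarrow> k \<in> C \<inter> {..N}" by (simp only: assms(1))
    then show ?thesis using that by simp
  qed
  have "?e \<in> C" using hasel_in[OF assms(2)] .
  then have eB: "?e \<in> B" using memb assms(3) by simp
  have "{k\<in>B. k < ?e} = {k\<in>C. k < ?e}"
    using memb assms(3) by (intro Collect_cong) (meson less_imp_le_nat order_trans)
  then have "card {k\<in>B. k < ?e} = i" using hasel_card[OF assms(2)] by simp
  then show ?thesis using hasel_char eB by blast
qed

lemma sorted_enum: assumes "finite B"
  shows "sorted_list_of_set B = map (enumerate B) [0..<card B]"
proof -
  have "sorted_wrt (<) (map (enumerate B) [0..<card B])"
    unfolding sorted_wrt_iff_nth_less by (simp add: assms finite_enumerate_mono)
  moreover have "set (map (enumerate B) [0..<card B]) = B"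
    using bij_betw_imp_surj_on[OF finite_bij_enumerate[OF assms]] by (simp add: atLeast0LessThan)
  moreover have "sorted_wrt (<) (sorted_list_of_set B)" by (rule strict_sorted_list_of_set)
  moreover have "set (sorted_list_of_set B) = B" using assms by simp
  ultimately show ?thesis using strict_sorted_equal by metis
qed



definition validF :: "(nat \<times> nat) set \<Rightarrow> bool" where
  "validF F \<longleftrightarrow> finite F \<and> (\<forall>p\<in>F. 1 \<le> fst p \<and> fst p \<le> snd p) \<and>
      (\<forall>p\<in>F. \<forall>q\<in>F. p \<noteq> q \<longrightarrow> {fst p..snd p} \<inter> {fst q..snd q} = {})"

definition Fsum :: "(nat \<Rightarrow> real) \<Rightarrow> (nat \<times> nat) set \<Rightarrow> real" where
  "Fsum x F = (\<Sum>p\<in>F. (\<Sum>k=fst p..snd p. x k)^2)"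

lemma J_mem: assumes "validF F" shows "Fsum x F \<in> J_values x"
  unfolding J_values_def Fsum_def mem_Collect_eq
proof (rule exI[of _ F])
  have "finite F" "\<forall>p\<in>F. 1 \<le> fst p \<and> fst p \<le> snd p"
     "\<forall>p\<in>F. \<forall>q\<in>F. p \<noteq> q \<longrightarrow> {fst p..snd p} \<inter> {fst q..snd q} = {}"
    using assms unfolding validF_def by blast+
  then show "(\<Sum>p\<in>F. (\<Sum>k = fst p..snd p. x k)^2) = (\<Sum>p\<in>F. (\<Sum>k = fst p..snd p. x k)^2) \<and>
    finite F \<and> (\<forall>p\<in>F. 1 \<le> fst p \<and> fst p \<le> snd p) \<and>
    (\<forall>p\<in>F. \<forall>q\<in>F. p \<noteq> q \<longrightarrow> {fst p..snd p} \<inter> {fst q..snd q} = {})"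
    by (intro conjI refl)
qed

lemma chainF:
  assumes "N \<le> p 0" "\<forall>j<r. p j < p (Suc j)"
  shows "\<exists>F. validF F \<and> (\<forall>q\<in>F. N < fst q \<and> snd q \<le> p r) \<and> N \<le> p r \<and>
     Fsum x F = (\<Sum>j<r. (psum x (p (Suc j)) - psum x (p j))^2)"
  using assms(2)
proof (induction r)
  case 0
  have "validF {}" by (simp add: validF_def)
  then show ?case using assms(1) by (intro exI[of _ "{}"]) (simp add: Fsum_def)
next
  case (Suc r)
  have "\<forall>j<r. p j < p (Suc j)" using Suc.prems by simp
  then obtain F where F: "validF F" "\<forall>q\<in>F. N < fst q \<and> snd q \<le> p r" "N \<le> p r"
     "Fsum x F = (\<Sum>j<r. (psum x (p (Suc j)) - psum x (p j))^2)" using Suc.IH by blast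
  have lt: "p r < p (Suc r)" using Suc.prems by auto
  define n where "n = (Suc (p r), p (Suc r))"
  have nF: "n \<notin> F"
  proof
    assume "n \<in> F"
    then have "snd n \<le> p r" using F(2) by blast
    then show False using lt by (simp add: n_def)
  qed
  have disj: "{fst n..snd n} \<inter> {fst q..snd q} = {}" if "q \<in> F" for q
  proof -
    have "snd q < fst n" using F(2) that by (simp add: n_def le_imp_less_Suc)
    then show ?thesis by auto
  qed
  have FV: "finite F" "\<forall>p\<in>F. 1 \<le> fst p \<and> fst p \<le> snd p"
     "\<forall>p\<in>F. \<forall>q\<in>F. p \<noteq> q \<longrightarrow> {fst p..snd p} \<inter> {fst q..snd q} = {}"
    using F(1) unfolding validF_def by blast+
  have "\<forall>a\<in>insert n F. \<forall>b\<in>insert n F. a \<noteq> b \<longrightarrow> {fst a..snd a} \<inter> {fst b..snd b} = {}"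
  proof (intro ballI impI)
    fix a b assume ab: "a \<in> insert n F" "b \<in> insert n F" "a \<noteq> b"
    show "{fst a..snd a} \<inter> {fst b..snd b} = {}"
    proof (cases "a = n")
      case True
      then have "b \<in> F" using ab by blast
      then show ?thesis using disj True by blast
    next
      case False
      then have aF: "a \<in> F" using ab by blast
      show ?thesis
      proof (cases "b = n")
        case True then show ?thesis using disj[OF aF] by (simp add: Int_commute)
      next
        case False then have "b \<in> F" using ab by blast
        then show ?thesis using FV(3) aF ab(3) by blast
      qed
    qed
  qed
  moreover have "\<forall>p\<in>insert n F. 1 \<le> fst p \<and> fst p \<le> snd p"
    using FV(2) lt by (simp add: n_def)
  ultimately have "validF (insert n F)" using FV(1) unfolding validF_def by blast
  moreover have "\<forall>q\<in>insert n F. N < fst q \<and> snd q \<le> p (Suc r)"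
    using F(2,3) lt unfolding n_def by (auto simp: le_imp_less_Suc)
  moreover have "N \<le> p (Suc r)" using F(3) lt by simp
  moreover have "Fsum x (insert n F) = (\<Sum>j<Suc r. (psum x (p (Suc j)) - psum x (p j))^2)"
  proof -
    have "finite F" using F(1) validF_def by blast
    then have "Fsum x (insert n F) = (\<Sum>k=fst n..snd n. x k)^2 + Fsum x F"
      using nF by (simp add: Fsum_def)
    also have "(\<Sum>k=fst n..snd n. x k) = psum x (p (Suc r)) - psum x (p r)"
      unfolding n_def using psum_diff lt by simp
    finally show ?thesis using F(4) by simp
  qed
  ultimately show ?case by blast
qed

lemma union_valid:
  assumes "validF F1" "validF F2" "\<forall>q\<in>F1. snd q \<le> M" "\<forall>q\<in>F2. M < fst q"
  shows "validF (F1 \<union> F2) \<and> Fsum x (F1 \<union> F2) = Fsum x F1 + Fsum x F2"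
proof -
  have d: "F1 \<inter> F2 = {}"
  proof (rule ccontr)
    assume "F1 \<inter> F2 \<noteq> {}"
    then obtain q where "q \<in> F1" "q \<in> F2" by blast
    then show False using assms unfolding validF_def by fastforce
  qed
  have dd: "{fst p..snd p} \<inter> {fst q..snd q} = {}" if "p \<in> F1" "q \<in> F2" for p q
    using assms(3,4) that by fastforce
  have "validF (F1 \<union> F2)"
    using assms(1,2) dd unfolding validF_def by (auto simp: Int_commute)
  moreover have "Fsum x (F1 \<union> F2) = Fsum x F1 + Fsum x F2"
    using assms(1,2) d unfolding validF_def Fsum_def by (simp add: sum.union_disjoint)
  ultimately show ?thesis by blast
qed

lemma vprop:
  assumes "in_J x" "eps > 0"
  shows "\<exists>N. \<forall>r p. N \<le> p 0 \<and> (\<forall>j<r. p j < p (Suc j)) \<longrightarrow>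
      (\<Sum>j<r. (psum x (p (Suc j)) - psum x (p j))^2) \<le> eps"
proof (rule ccontr)
  assume H: "\<not> ?thesis"
  have H': "\<exists>r p. N \<le> p 0 \<and> (\<forall>j<r. p j < p (Suc j)) \<and>
      (\<Sum>j<r. (psum x (p (Suc j)) - psum x (p j))^2) > eps" for N
    using H by (meson not_le)
  have K: "\<exists>F M. validF F \<and> (\<forall>q\<in>F. snd q \<le> M) \<and> Fsum x F \<ge> real K * eps" for K
  proof (induction K)
    case 0
    have "validF {}" by (simp add: validF_def)
    then show ?case by (auto simp: Fsum_def)
  next
    case (Suc K)
    then obtain F M where F: "validF F" "\<forall>q\<in>F. snd q \<le> M" "Fsum x F \<ge> real K * eps" by blast
    obtain r p where rp: "M \<le> p 0" "\<forall>j<r. p j < p (Suc j)"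
       "(\<Sum>j<r. (psum x (p (Suc j)) - psum x (p j))^2) > eps" using H'[of M] by blast
    obtain F2 where F2: "validF F2" "\<forall>q\<in>F2. M < fst q \<and> snd q \<le> p r"
       "Fsum x F2 = (\<Sum>j<r. (psum x (p (Suc j)) - psum x (p j))^2)"
      using chainF[OF rp(1,2), of x] by blast
    have U: "validF (F \<union> F2) \<and> Fsum x (F \<union> F2) = Fsum x F + Fsum x F2"
      using union_valid[OF F(1) F2(1) F(2)] F2(2) by blast
    have "\<forall>q\<in>F \<union> F2. snd q \<le> max M (p r)" using F(2) F2(2) by fastforce
    moreover have "Fsum x (F \<union> F2) \<ge> real (Suc K) * eps"
      using U F(3) F2(3) rp(3) by (simp add: distrib_right)
    ultimately show ?case using U by blast
  qed
  obtain b where b: "\<forall>y\<in>J_values x. y \<le> b" using assms(1) unfolding in_J_def bdd_above_def by blast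
  obtain K :: nat where "b / eps < real K" using reals_Archimedean2 by blast
  then have "b < real K * eps" using assms(2) by (simp add: field_simps)
  moreover obtain F M where "validF F" "Fsum x F \<ge> real K * eps" using K by blast
  ultimately show False using b J_mem by fastforce
qed

lemma psum_conv: assumes "in_J x" shows "convergent (psum x)"
proof -
  have "Cauchy (psum x)"
  proof (rule metric_CauchyI)
    fix e :: real assume e: "e > 0"
    obtain N where N: "\<forall>r p. N \<le> p 0 \<and> (\<forall>j<r. p j < p (Suc j)) \<longrightarrow>
      (\<Sum>j<r. (psum x (p (Suc j)) - psum x (p j))^2) \<le> (e/2)^2"
      using vprop[OF assms, of "(e/2)^2"] e by auto
    have key: "\<bar>psum x n - psum x m\<bar> \<le> e/2" if "N \<le> m" "m < n" for m n
    proof -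
      have "(\<Sum>j<1. (psum x ((\<lambda>j. if j = 0 then m else n) (Suc j)) - psum x ((\<lambda>j. if j = 0 then m else n) j))^2) \<le> (e/2)^2"
        using N[rule_format, of "\<lambda>j. if j = 0 then m else n" 1] that by simp
      then have "(psum x n - psum x m)^2 \<le> (e/2)^2" by simp
      then show ?thesis using e abs_le_square_iff[of "psum x n - psum x m" "e/2"] by simp
    qed
    show "\<exists>M. \<forall>m\<ge>M. \<forall>n\<ge>M. dist (psum x m) (psum x n) < e"
    proof (intro exI allI impI)
      fix m n assume mn: "N \<le> m" "N \<le> n"
      have "\<bar>psum x m - psum x n\<bar> \<le> e/2"
      proof (cases m n rule: linorder_cases)
        case less then show ?thesis using key[of m n] mn by (simp add: abs_minus_commute)
      next
        case equal then show ?thesis using e by simp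
      next
        case greater then show ?thesis using key[of n m] mn by simp
      qed
      then show "dist (psum x m) (psum x n) < e" using e by (simp add: dist_real_def)
    qed
  qed
  then show ?thesis by (simp add: Cauchy_convergent_iff)
qed



fun val :: "(nat \<Rightarrow> real) \<Rightarrow> real \<Rightarrow> nat set \<Rightarrow> nat \<Rightarrow> real" where
  "val x L B 0 = 0"
| "val x L B (Suc i) = (if hasel B i then psum x (enumerate B i) else L)"

definition trm :: "(nat \<Rightarrow> real) \<Rightarrow> real \<Rightarrow> nat set \<Rightarrow> nat \<Rightarrow> real" where
  "trm x L B i = (val x L B (Suc i) - val x L B i)^2"

lemma CL:
  assumes N: "\<forall>r p. N \<le> p 0 \<and> (\<forall>j<r. p j < p (Suc j)) \<longrightarrow>
      (\<Sum>j<r. (psum x (p (Suc j)) - psum x (p j))^2) \<le> eps"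
    and lim: "psum x \<longlonglongrightarrow> L"
    and dc: "\<forall>j. P (Suc j) \<longrightarrow> P j"
    and pv: "\<forall>j. P j \<longrightarrow> v j = psum x (p j) \<and> N \<le> p j"
    and pm: "\<forall>j. P (Suc j) \<longrightarrow> p j < p (Suc j)"
    and nv: "\<forall>j. \<not> P j \<longrightarrow> v j = L"
  shows "(\<Sum>j<r. (v (Suc j) - v j)^2) \<le> eps"
proof -
  have dcl: "P i" if "P j" "i \<le> j" for i j
    using that
  proof (induction j)
    case 0 then show ?case by simp
  next
    case (Suc j) then show ?case using dc by (cases "i = Suc j") auto
  qed
  have eps0: "0 \<le> eps" using N[rule_format, of "\<lambda>_. N" 0] by simp
  show ?thesis
  proof (cases "P r")
    case True
    have "(\<Sum>j<r. (v (Suc j) - v j)^2) = (\<Sum>j<r. (psum x (p (Suc j)) - psum x (p j))^2)"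
    proof (rule sum.cong)
      fix j assume "j \<in> {..<r}"
      then have "P j" "P (Suc j)" using dcl[OF True] by auto
      then show "(v (Suc j) - v j)^2 = (psum x (p (Suc j)) - psum x (p j))^2" using pv by simp
    qed simp
    also have "\<dots> \<le> eps"
    proof -
      have "P 0" using dcl[OF True] by simp
      then have "N \<le> p 0" using pv by simp
      moreover have "\<forall>j<r. p j < p (Suc j)" using pm dcl[OF True] by auto
      ultimately show ?thesis using N by blast
    qed
    finally show ?thesis .
  next
    case False
    define k where "k = (LEAST j. \<not> P j)"
    have kr: "k \<le> r" unfolding k_def using False by (rule Least_le)
    have nPk: "\<not> P k" unfolding k_def using False by (rule LeastI)
    have nP: "\<not> P j" if "k \<le> j" for j using dcl[of j k] that nPk by blast
    have Pj: "P j" if "j < k" for j using not_less_Least[of j "\<lambda>j. \<not> P j"] that k_def by blast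
    have "(\<Sum>j<r. (v (Suc j) - v j)^2) = (\<Sum>j<k. (v (Suc j) - v j)^2)"
    proof (rule sum.mono_neutral_right)
      show "\<forall>i\<in>{..<r} - {..<k}. (v (Suc i) - v i)^2 = 0"
        using nP nv by auto
    qed (use kr in auto)
    also have "\<dots> \<le> eps"
    proof (cases k)
      case 0 then show ?thesis using eps0 by simp
    next
      case (Suc k')
      define A where "A = (\<Sum>j<k'. (psum x (p (Suc j)) - psum x (p j))^2)"
      have PP: "P j" if "j \<le> k'" for j using Pj that Suc by simp
      have "(\<Sum>j<k. (v (Suc j) - v j)^2) = A + (L - psum x (p k'))^2"
      proof -
        have "(\<Sum>j<k'. (v (Suc j) - v j)^2) = A"
          unfolding A_def
        proof (rule sum.cong)
          fix j assume "j \<in> {..<k'}"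
          then have "P j" "P (Suc j)" using PP by auto
          then show "(v (Suc j) - v j)^2 = (psum x (p (Suc j)) - psum x (p j))^2" using pv by simp
        qed simp
        moreover have "v (Suc k') = L" using nv nPk Suc by simp
        moreover have "v k' = psum x (p k')" using pv PP by simp
        ultimately show ?thesis using Suc by simp
      qed
      also have "\<dots> \<le> eps"
      proof -
        have bound: "A + (psum x (M + Suc (p k')) - psum x (p k'))^2 \<le> eps" for M
        proof -
          define q where "q j = (if j \<le> k' then p j else M + Suc (p k'))" for j
          have "N \<le> q 0" using PP pv unfolding q_def by simp
          moreover have "\<forall>j<Suc k'. q j < q (Suc j)"
          proof (intro allI impI)
            fix j assume "j < Suc k'"
            then show "q j < q (Suc j)"
            proof (cases "j < k'")
              case True then show ?thesis using pm PP unfolding q_def by simp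
            next
              case False then have "j = k'" using \<open>j < Suc k'\<close> by simp
              then show ?thesis unfolding q_def by simp
            qed
          qed
          ultimately have "(\<Sum>j<Suc k'. (psum x (q (Suc j)) - psum x (q j))^2) \<le> eps"
            using N by blast
          moreover have "(\<Sum>j<k'. (psum x (q (Suc j)) - psum x (q j))^2) = A"
            unfolding A_def q_def by (rule sum.cong) auto
          ultimately show ?thesis unfolding q_def by simp
        qed
        have "(\<lambda>M. A + (psum x (M + Suc (p k')) - psum x (p k'))^2) \<longlonglongrightarrow> A + (L - psum x (p k'))^2"
          by (intro tendsto_intros LIMSEQ_ignore_initial_segment lim)
        then show ?thesis using bound by (intro LIMSEQ_le_const2) auto
      qed
      finally show ?thesis using Suc by simp
    qed
    finally show ?thesis .
  qed
qed

lemma TB: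
  assumes "in_J x" "psum x \<longlonglongrightarrow> L" "eps > 0"
  shows "\<exists>I. \<forall>B R. (\<Sum>i\<in>{I..<R}. trm x L B i) \<le> eps"
proof -
  obtain N where N: "\<forall>r p. N \<le> p 0 \<and> (\<forall>j<r. p j < p (Suc j)) \<longrightarrow>
      (\<Sum>j<r. (psum x (p (Suc j)) - psum x (p j))^2) \<le> eps"
    using vprop[OF assms(1,3)] by blast
  have "(\<Sum>i\<in>{Suc N..<R}. trm x L B i) \<le> eps" for B R
  proof (cases "R \<le> Suc N")
    case True then show ?thesis using assms(3) by simp
  next
    case False
    then obtain r where R: "R = r + Suc N" by (metis add.commute le_add_diff_inverse nat_le_linear)
    have "(\<Sum>i\<in>{Suc N..<R}. trm x L B i) = (\<Sum>j\<in>{0..<r}. trm x L B (j + Suc N))"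
      unfolding R using sum.shift_bounds_nat_ivl[of "trm x L B" 0 "Suc N" r] by simp
    also have "\<dots> = (\<Sum>j<r. (val x L B (Suc j + Suc N) - val x L B (j + Suc N))^2)"
      by (simp add: trm_def atLeast0LessThan)
    also have "\<dots> \<le> eps"
    proof (rule CL[OF N assms(2), of "\<lambda>j. hasel B (j + N)"])
      show "\<forall>j. hasel B (Suc j + N) \<longrightarrow> hasel B (j + N)" using hasel_mono by auto
      show "\<forall>j. hasel B (j + N) \<longrightarrow> val x L B (j + Suc N) = psum x (enumerate B (j + N)) \<and> N \<le> enumerate B (j + N)"
      proof (intro allI impI conjI)
        fix j assume h: "hasel B (j + N)"
        show "val x L B (j + Suc N) = psum x (enumerate B (j + N))" using h by simp
        show "N \<le> enumerate B (j + N)" using hasel_le[OF h] by linarith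
      qed
      show "\<forall>j. hasel B (Suc j + N) \<longrightarrow> enumerate B (j + N) < enumerate B (Suc j + N)"
        using hasel_mono by auto
      show "\<forall>j. \<not> hasel B (j + N) \<longrightarrow> val x L B (j + Suc N) = L" by simp
    qed
    finally show ?thesis .
  qed
  then show ?thesis by blast
qed



lemma val_conv:
  assumes lim: "psum x \<longlonglongrightarrow> L"
    and ev: "\<forall>N. eventually (\<lambda>n. As n \<inter> {..N} = A \<inter> {..N}) sequentially"
  shows "(\<lambda>n. val x L (As n) i) \<longlonglongrightarrow> val x L A i"
proof (cases i)
  case 0 then show ?thesis by simp
next
  case (Suc i')
  show ?thesis
  proof (cases "hasel A i'")
    case True
    let ?e = "enumerate A i'"
    have "eventually (\<lambda>n. val x L (As n) i = val x L A i) sequentially"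
      using ev[rule_format, of ?e]
    proof (rule eventually_mono)
      fix n assume "As n \<inter> {..?e} = A \<inter> {..?e}"
      then have "hasel (As n) i' \<and> enumerate (As n) i' = ?e" using stab True by blast
      then show "val x L (As n) i = val x L A i" using True Suc by simp
    qed
    then show ?thesis by (rule tendsto_eventually)
  next
    case False
    have vA: "val x L A i = L" using False Suc by simp
    show ?thesis unfolding vA tendsto_iff
    proof (intro allI impI)
      fix e :: real assume e: "e > 0"
      obtain M where M: "\<forall>m\<ge>M. dist (psum x m) L < e"
        using lim e unfolding lim_sequentially by blast
      show "eventually (\<lambda>n. dist (val x L (As n) i) L < e) sequentially"
        using ev[rule_format, of M]
      proof (rule eventually_mono)
        fix n assume agree: "As n \<inter> {..M} = A \<inter> {..M}"
        show "dist (val x L (As n) i) L < e"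
        proof (cases "hasel (As n) i'")
          case True
          have "\<not> enumerate (As n) i' \<le> M"
          proof
            assume "enumerate (As n) i' \<le> M"
            then have "hasel A i'" using stab[OF agree[symmetric] True] by blast
            then show False using False by simp
          qed
          then show ?thesis using M True Suc by simp
        next
          case False then show ?thesis using Suc e by simp
        qed
      qed
    qed
  qed
qed

lemma ev_agree:
  assumes "\<forall>k. (\<lambda>n. indicator (As n) (k::nat) :: real) \<longlonglongrightarrow> indicator A k"
  shows "eventually (\<lambda>n. As n \<inter> {..N} = A \<inter> {..N}) sequentially"
proof -
  have "eventually (\<lambda>n. k \<in> As n \<longleftrightarrow> k \<in> A) sequentially" for k
  proof -
    have "eventually (\<lambda>n. dist (indicator (As n) k :: real) (indicator A k) < 1/2) sequentially"
      using assms unfolding tendsto_iff by (meson divide_pos_pos zero_less_one zero_less_numeral)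
    then show ?thesis
    proof (rule eventually_mono)
      fix n assume d: "dist (indicator (As n) k :: real) (indicator A k) < 1/2"
      show "k \<in> As n \<longleftrightarrow> k \<in> A"
        by (cases "k \<in> A"; cases "k \<in> As n") (use d in \<open>auto simp: dist_real_def\<close>)
    qed
  qed
  then have "eventually (\<lambda>n. \<forall>k\<in>{..N}. k \<in> As n \<longleftrightarrow> k \<in> A) sequentially"
    by (intro eventually_ball_finite) auto
  then show ?thesis by (rule eventually_mono) auto
qed

lemma tail_sums:
  assumes "psum x \<longlonglongrightarrow> L"
  shows "(\<lambda>k. x (k + a + 1)) sums (L - psum x a)"
proof -
  have eq: "(\<Sum>k<n. x (k + a + 1)) = psum x (n + a) - psum x a" for n
  proof (induction n)
    case 0 then show ?case by simp
  next
    case (Suc n)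
    have "psum x (Suc n + a) = psum x (n + a) + x (Suc (n + a))"
      by (simp add: psum_def)
    then show ?case using Suc by simp
  qed
  have "(\<lambda>n. psum x (n + a) - psum x a) \<longlonglongrightarrow> L - psum x a"
    by (intro tendsto_intros LIMSEQ_ignore_initial_segment assms)
  then show ?thesis unfolding sums_def eq .
qed

lemma normA_rep:
  assumes lim: "psum x \<longlonglongrightarrow> L"
  shows "normA x B = sqrt (\<Sum>i. trm x L B i)"
proof (cases "finite B")
  case False
  have "(\<Sum>k\<in>{pt B i<..pt B (Suc i)}. x k)^2 = trm x L B i" for i
  proof -
    have vpt: "val x L B j = psum x (pt B j)" for j
      using False by (cases j) (auto simp: pt_def hasel_def)
    have "pt B i \<le> pt B (Suc i)"
      using False by (cases i) (auto simp: pt_def)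
    then show ?thesis unfolding trm_def vpt using psum_diff' by simp
  qed
  then show ?thesis using False by (simp add: normA_def)
next
  case True
  define c where "c = card B"
  define m where "m = 0 # sorted_list_of_set B"
  have m_eq: "m = 0 # map (enumerate B) [0..<c]" unfolding m_def c_def using sorted_enum[OF True] by simp
  have len: "length m - 1 = c" unfolding m_eq by simp
  have m0: "m ! 0 = 0" unfolding m_eq by simp
  have mS: "m ! Suc i = enumerate B i" if "i < c" for i unfolding m_eq using that by simp
  have vm: "val x L B i = psum x (m ! i)" if "i \<le> c" for i
    using that True by (cases i) (auto simp: m0 mS hasel_def c_def)
  have lastm: "last m = m ! c" using len by (simp add: last_conv_nth m_eq)
  have terms: "(\<Sum>k\<in>{m!i<..m!(Suc i)}. x k)^2 = trm x L B i" if "i < c" for i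
  proof -
    have "m ! i \<le> m ! Suc i"
    proof (cases i)
      case 0 then show ?thesis by (simp add: m0)
    next
      case (Suc i')
      have "enumerate B i' < enumerate B i"
        using finite_enumerate_mono[of i' i B] True that Suc c_def by simp
      then show ?thesis using that mS[of i] mS[of i'] Suc by simp
    qed
    then show ?thesis using psum_diff' that vm[of i] vm[of "Suc i"] by (simp add: trm_def)
  qed
  have tail: "(\<Sum>k. x (k + last m + 1)) = L - psum x (m ! c)"
    using tail_sums[OF lim, of "last m"] lastm by (simp add: sums_iff)
  have tc: "trm x L B c = (L - psum x (m ! c))^2"
    using vm[of c] True by (simp add: trm_def hasel_def c_def)
  have t0: "trm x L B i = 0" if ni: "i \<notin> {..<Suc c}" for i
  proof -
    obtain i' where i': "i = Suc i'" "c \<le> i'" using ni by (cases i) auto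
    then show ?thesis using True by (simp add: trm_def hasel_def c_def)
  qed
  have "(\<Sum>i. trm x L B i) = (\<Sum>i<Suc c. trm x L B i)"
    by (rule suminf_finite) (use t0 in auto)
  also have "\<dots> = (\<Sum>i<c. (\<Sum>k\<in>{m!i<..m!(Suc i)}. x k)^2) + (\<Sum>k. x (k + last m + 1))^2"
    using terms tail tc by simp
  finally show ?thesis using True unfolding normA_def Let_def m_def[symmetric] len by simp
qed

lemma summ_tail:
  fixes h :: "nat \<Rightarrow> real"
  assumes "\<forall>i. 0 \<le> h i" "\<forall>R. (\<Sum>i\<in>{I..<R}. h i) \<le> e"
  shows "summable h \<and> (\<Sum>i<I. h i) \<le> suminf h \<and> suminf h \<le> (\<Sum>i<I. h i) + e"
proof -
  have e0: "0 \<le> e" using assms(2)[rule_format, of 0] by simp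
  have ps: "(\<Sum>i<R. h i) \<le> (\<Sum>i<I. h i) + e" for R
  proof (cases "R \<le> I")
    case True
    then have "(\<Sum>i<R. h i) \<le> (\<Sum>i<I. h i)" using assms(1) by (intro sum_mono2) auto
    then show ?thesis using e0 by simp
  next
    case False
    then have "(\<Sum>i<R. h i) = (\<Sum>i<I. h i) + (\<Sum>i\<in>{I..<R}. h i)"
      by (simp add: lessThan_atLeast0 sum.atLeastLessThan_concat)
    then show ?thesis using assms(2) by simp
  qed
  have s: "summable h" using assms(1) ps by (intro summableI_nonneg_bounded) auto
  moreover have "(\<Sum>i<I. h i) \<le> suminf h" using s assms(1) by (intro sum_le_suminf) auto
  moreover have "suminf h \<le> (\<Sum>i<I. h i) + e" using s ps by (intro suminf_le_const) auto
  ultimately show ?thesis by blast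
qed

lemma tannery:
  fixes f :: "nat \<Rightarrow> nat \<Rightarrow> real" and g :: "nat \<Rightarrow> real"
  assumes nnf: "\<forall>n i. 0 \<le> f n i" and nng: "\<forall>i. 0 \<le> g i"
    and pw: "\<forall>i. (\<lambda>n. f n i) \<longlonglongrightarrow> g i"
    and tl: "\<forall>eps>0. \<exists>I. \<forall>R. (\<forall>n. (\<Sum>i\<in>{I..<R}. f n i) \<le> eps) \<and> (\<Sum>i\<in>{I..<R}. g i) \<le> eps"
  shows "(\<lambda>n. suminf (f n)) \<longlonglongrightarrow> suminf g"
  unfolding LIMSEQ_iff
proof (intro allI impI)
  fix r :: real assume r: "r > 0"
  obtain I where I: "\<forall>R. (\<forall>n. (\<Sum>i\<in>{I..<R}. f n i) \<le> r/3) \<and> (\<Sum>i\<in>{I..<R}. g i) \<le> r/3"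
    using tl r by (meson divide_pos_pos zero_less_numeral)
  have tf: "(\<Sum>i<I. f n i) \<le> suminf (f n) \<and> suminf (f n) \<le> (\<Sum>i<I. f n i) + r/3" for n
    using summ_tail[of "f n" I "r/3"] nnf I by blast
  have tg: "(\<Sum>i<I. g i) \<le> suminf g \<and> suminf g \<le> (\<Sum>i<I. g i) + r/3"
    using summ_tail[of g I "r/3"] nng I by blast
  have "(\<lambda>n. \<Sum>i<I. f n i) \<longlonglongrightarrow> (\<Sum>i<I. g i)"
    using pw by (intro tendsto_sum) auto
  then obtain no where no: "\<forall>n\<ge>no. norm ((\<Sum>i<I. f n i) - (\<Sum>i<I. g i)) < r/3"
    using r unfolding LIMSEQ_iff by (meson divide_pos_pos zero_less_numeral)
  show "\<exists>no. \<forall>n\<ge>no. norm (suminf (f n) - suminf g) < r"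
  proof (intro exI allI impI)
    fix n assume "no \<le> n"
    then have "\<bar>(\<Sum>i<I. f n i) - (\<Sum>i<I. g i)\<bar> < r/3" using no by simp
    then have h: "-(r/3) < (\<Sum>i<I. f n i) - (\<Sum>i<I. g i)" "(\<Sum>i<I. f n i) - (\<Sum>i<I. g i) < r/3"
      by (simp_all only: abs_less_iff) linarith+
    have "-r < suminf (f n) - suminf g" "suminf (f n) - suminf g < r" using h tf[of n] tg by linarith+
    then show "norm (suminf (f n) - suminf g) < r" by (simp add: abs_less_iff)
  qed
qed


theorem proposition3p2:
  fixes x :: "nat \<Rightarrow> real" and As :: "nat \<Rightarrow> nat set" and A :: "nat set"
  assumes "in_J x"
    and "\<forall>k\<ge>1. x k \<noteq> 0"
    and "\<forall>n. As n \<noteq> {} \<and> finite (As n) \<and> As n \<subseteq> {1..}"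
    and "A \<subseteq> {1..}"
    and "\<forall>k. (\<lambda>n. indicator (As n) (k::nat) :: real) \<longlonglongrightarrow> indicator A k"
  shows "(\<lambda>n. normA x (As n)) \<longlonglongrightarrow> normA x A"
proof -
  obtain L where lim: "psum x \<longlonglongrightarrow> L" using psum_conv[OF assms(1)] unfolding convergent_def by blast
  have ev: "\<forall>N. eventually (\<lambda>n. As n \<inter> {..N} = A \<inter> {..N}) sequentially"
    using ev_agree[OF assms(5)] by blast
  have "(\<lambda>n. \<Sum>i. trm x L (As n) i) \<longlonglongrightarrow> (\<Sum>i. trm x L A i)"
  proof (rule tannery)
    show "\<forall>n i. 0 \<le> trm x L (As n) i" by (simp add: trm_def)
    show "\<forall>i. 0 \<le> trm x L A i" by (simp add: trm_def)
    show "\<forall>i. (\<lambda>n. trm x L (As n) i) \<longlonglongrightarrow> trm x L A i"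
      unfolding trm_def by (intro allI tendsto_intros val_conv[OF lim ev])
    show "\<forall>eps>0. \<exists>I. \<forall>R. (\<forall>n. (\<Sum>i\<in>{I..<R}. trm x L (As n) i) \<le> eps) \<and> (\<Sum>i\<in>{I..<R}. trm x L A i) \<le> eps"
    proof (intro allI impI)
      fix eps :: real assume "eps > 0"
      then obtain I where "\<forall>B R. (\<Sum>i\<in>{I..<R}. trm x L B i) \<le> eps" using TB[OF assms(1) lim] by blast
      then show "\<exists>I. \<forall>R. (\<forall>n. (\<Sum>i\<in>{I..<R}. trm x L (As n) i) \<le> eps) \<and> (\<Sum>i\<in>{I..<R}. trm x L A i) \<le> eps"
        by blast
    qed
  qed
  then have "(\<lambda>n. sqrt (\<Sum>i. trm x L (As n) i)) \<longlonglongrightarrow> sqrt (\<Sum>i. trm x L A i)"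
    by (rule tendsto_real_sqrt)
  then show ?thesis unfolding normA_rep[OF lim] .
qed

end
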